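(* Let $G=(m,n,\boldsymbol{c},\boldsymbol{d},r_{\max},r_{\min})$ be an interbank lending game whose lenders are indexed so that $c_1\le c_2\le\dots\le c_m$. Set $c_{m+1}=\infty$, $D=\sum_{k\in B}d_k$, and let $\bar m$ be the least index in $\{0,1,\dots,m\}$ such that $$c_{\bar m+1}>\frac{1}{m-\bar m+1}\Bigl(D-\sum_{\ell=1}^{\bar m}c_\ell\Bigr).$$ Let $\bar L=\{1,\dots,\bar m\}$ and $q=\frac{1}{m-\bar m+1}\bigl(1-\frac{\sum_{\ell\in\bar L}c_\ell}{D}\bigr)$. Define $\boldsymbol{s}^*$ by $s^*_{ij}=\frac{c_i}{D}d_j$ for $i\in\bar L$, $j\in B$, and $s^*_{ij}=q\,d_j$ for $i\in L\setminus\bar L$, $j\in B$; and define multipliers $\mu_i=(r_{\min}-r_{\max})\bigl(\frac{c_i}{D}-q\bigr)$ for $i\in\bar L$, $\mu_i=0$ for $i\in L\setminus\bar L$, and $\mu_{ij}=0$ for all $i\in L,j\in B$. Then $(\boldsymbol{s}^*,\boldsymbol{\mu})$ satisfies all of the following Karush–Kuhn–Tucker conditions for the problem of maximising $\Phi(\boldsymbol{s})$ subject to $\sum_{j\in B}s_{ij}\le c_i$ ($i\in L$) and $s_{ij}\ge0$ ($i\in L,j\in B$): (1) primal feasibility: $\sum_{j\in B}s^*_{ij}\le c_i$ and $s^*_{ij}\ge0$ for all $i,j$; (2) stationarity: for all $i\in L,j\in B$, $(r_{\min}-r_{\max})\bigl(\frac{1}{d_j}(s^*_{ij}+\sum_{k\in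 L}s^*_{kj})-1\bigr)-\mu_i+\mu_{ij}=0$ (the first term being $\partial\Phi/\partial s_{ij}$ at $\boldsymbol{s}^*$); (3) dual feasibility: $\mu_i\ge0$ and $\mu_{ij}\ge0$ for all $i,j$; (4) complementary slackness: $\mu_i(c_i-\sum_{j\in B}s^*_{ij})=0$ and $\mu_{ij}s^*_{ij}=0$ for all $i,j$. Consequently, $\boldsymbol{s}^*$ is the unique pure Nash equilibrium of $G$.
   Context: An interbank lending game $G=(m,n,\boldsymbol{c},\boldsymbol{d},r_{\max},r_{\min})$ consists of positive integers $m,n$, budgets $\boldsymbol{c}\in\mathbb{R}_{>0}^m$, demands $\boldsymbol{d}\in\mathbb{R}_{>0}^n$ and reals $0<r_{\min}<r_{\max}$. The players are the lenders $L=\{1,\dots,m\}$; $B=\{1,\dots,n\}$ is the set of borrowers. Lender $i$'s strategy set is $S_i=\{s_i\in\mathbb{R}_{\ge0}^n:\sum_{j\in B}s_{ij}\le c_i\}$, the strategy space is $\boldsymbol{S}=\prod_{i\in L}S_i$ with elements $\boldsymbol{s}=(s_{ij})$. The interest rate of borrower $j$ is $r_j(\boldsymbol{s})=(r_{\min}-r_{\max})\frac{\sum_{i\in L}s_{ij}}{d_j}+r_{\max}$ and lender $i$'s utility is $u_i(\boldsymbol{s})=\sum_{j\in B}(r_j(\boldsymbol{s})-r_{\min})s_{ij}$. A pure Nash equilibrium is $\boldsymbol{s}^*\in\boldsymbol{S}$ with $u_i(\boldsymbol{s}^* )\ge u_i(s_i,\boldsymbol{s}^*_{-i})$ for all $i\in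 L$, $s_i\in S_i$. The potential function is $$\Phi(\boldsymbol{s})=\sum_{j\in B}\sum_{i\in L}\Bigl((r_{\min}-r_{\max})\frac{\sum_{\ell=1}^{i}s_{\ell j}}{d_j}+r_{\max}-r_{\min}\Bigr)s_{ij},$$ equivalently $\Phi(\boldsymbol{s})=\sum_{j\in B}\Bigl(\frac{r_{\min}-r_{\max}}{2d_j}\bigl(\sum_{i}s_{ij}^2+(\sum_i s_{ij})^2\bigr)+(r_{\max}-r_{\min})\sum_i s_{ij}\Bigr)$. *)

theory Defs
  imports Main "HOL.Real"
begin

text \<open>Lenders are indexed by 1..m, borrowers by 1..n. A strategy profile is
  s :: nat => nat => real, with s i j the amount lender i lends to borrower j
  (only the entries with i in 1..m, j in 1..n are meaningful).\<close>

definition interest_rate ::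
  "nat \<Rightarrow> (nat \<Rightarrow> real) \<Rightarrow> real \<Rightarrow> real \<Rightarrow> (nat \<Rightarrow> nat \<Rightarrow> real) \<Rightarrow> nat \<Rightarrow> real" where
  "interest_rate m d rmax rmin s j =
     (rmin - rmax) * (\<Sum>i=1..m. s i j) / d j + rmax"

definition utility ::
  "nat \<Rightarrow> nat \<Rightarrow> (nat \<Rightarrow> real) \<Rightarrow> real \<Rightarrow> real \<Rightarrow> (nat \<Rightarrow> nat \<Rightarrow> real) \<Rightarrow> nat \<Rightarrow> real" where
  "utility m n d rmax rmin s i =
     (\<Sum>j=1..n. (interest_rate m d rmax rmin s j - rmin) * s i j)"

definition strategy_of :: "nat \<Rightarrow> (nat \<Rightarrow> real) \<Rightarrow> nat \<Rightarrow> (nat \<Rightarrow> real) \<Rightarrow> bool" where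
  "strategy_of n c i t \<longleftrightarrow> (\<forall>j\<in>{1..n}. t j \<ge> 0) \<and> (\<Sum>j=1..n. t j) \<le> c i"

definition profile :: "nat \<Rightarrow> nat \<Rightarrow> (nat \<Rightarrow> real) \<Rightarrow> (nat \<Rightarrow> nat \<Rightarrow> real) \<Rightarrow> bool" where
  "profile m n c s \<longleftrightarrow> (\<forall>i\<in>{1..m}. strategy_of n c i (s i))"

definition pure_NE ::
  "nat \<Rightarrow> nat \<Rightarrow> (nat \<Rightarrow> real) \<Rightarrow> (nat \<Rightarrow> real) \<Rightarrow> real \<Rightarrow> real \<Rightarrow> (nat \<Rightarrow> nat \<Rightarrow> real) \<Rightarrow> bool" where
  "pure_NE m n c d rmax rmin s \<longleftrightarrow> profile m n c s \<and>
     (\<forall>i\<in>{1..m}. \<forall>t. strategy_of n c i t \<longrightarrow>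
        utility m n d rmax rmin s i \<ge> utility m n d rmax rmin (s(i := t)) i)"

end

theory Submission imports Defs begin

definition grad :: "nat \<Rightarrow> (nat \<Rightarrow> real) \<Rightarrow> real \<Rightarrow> real \<Rightarrow> (nat \<Rightarrow> nat \<Rightarrow> real) \<Rightarrow> nat \<Rightarrow> nat \<Rightarrow> real" where
  "grad m d rmax rmin s i j = (rmax - rmin) * (1 - (s i j + (\<Sum>k=1..m. s k j)) / d j)"

lemma util_diff:
  fixes s :: "nat \<Rightarrow> nat \<Rightarrow> real"
  assumes i: "i \<in> {1..m}" and d: "\<forall>j\<in>{1..n}. d j \<noteq> 0"
  shows "utility m n d rmax rmin (s(i:=t)) i - utility m n d rmax rmin s i
    = (\<Sum>j=1..n. grad m d rmax rmin s i j * (t j - s i j)) - (rmax - rmin) * (\<Sum>j=1..n. (t j - s i j)^2 / d j)"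
proof -
  have S: "(\<Sum>k=1..m. (s(i:=t)) k j) = (\<Sum>k=1..m. s k j) - s i j + t j" for j
  proof -
    have a: "(\<Sum>k=1..m. (s(i:=t)) k j) = t j + (\<Sum>k\<in>{1..m}-{i}. (s(i:=t)) k j)"
      using i by (simp add: sum.remove)
    have a2: "(\<Sum>k\<in>{1..m}-{i}. (s(i:=t)) k j) = (\<Sum>k\<in>{1..m}-{i}. s k j)"
      by (rule sum.cong) auto
    have b: "(\<Sum>k=1..m. s k j) = s i j + (\<Sum>k\<in>{1..m}-{i}. s k j)" using i by (simp add: sum.remove)
    from a a2 b show ?thesis by simp
  qed
  have per: "((rmin-rmax) * ((\<Sum>k=1..m. s k j) - s i j + t j) / d j + rmax - rmin) * t j
     - ((rmin - rmax) * (\<Sum>k=1..m. s k j) / d j + rmax - rmin) * s i j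
     = grad m d rmax rmin s i j * (t j - s i j) - (rmax-rmin) * ((t j - s i j)^2 / d j)"
    if "j\<in>{1..n}" for j
  proof -
    have "d j \<noteq> 0" using d that by auto
    then show ?thesis unfolding grad_def by (simp add: field_simps power2_eq_square)
  qed
  have "utility m n d rmax rmin (s(i:=t)) i - utility m n d rmax rmin s i
     = (\<Sum>j=1..n. ((rmin-rmax) * ((\<Sum>k=1..m. s k j) - s i j + t j) / d j + rmax - rmin) * t j
     - ((rmin - rmax) * (\<Sum>k=1..m. s k j) / d j + rmax - rmin) * s i j)"
    unfolding utility_def interest_rate_def S by (simp add: sum_subtractf)
  also have "\<dots> = (\<Sum>j=1..n. grad m d rmax rmin s i j * (t j - s i j) - (rmax-rmin) * ((t j - s i j)^2 / d j))"
    by (rule sum.cong[OF refl], rule per) assumption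
  finally show ?thesis by (simp add: sum_subtractf sum_distrib_left)
qed

lemma kkt_ineq:
  assumes stat: "\<forall>j\<in>{1..n}. grad m d rmax rmin x i j = mu i"
    and mun: "mu i \<ge> 0"
    and slack: "mu i * (c i - (\<Sum>j=1..n. x i j)) = 0"
    and t: "strategy_of n c i t"
  shows "(\<Sum>j=1..n. grad m d rmax rmin x i j * (t j - x i j)) \<le> 0"
proof -
  have "(\<Sum>j=1..n. grad m d rmax rmin x i j * (t j - x i j)) = (\<Sum>j=1..n. mu i * (t j - x i j))"
    by (rule sum.cong[OF refl]) (use stat in auto)
  also have "\<dots> = mu i * ((\<Sum>j=1..n. t j) - c i) + mu i * (c i - (\<Sum>j=1..n. x i j))"
    by (simp add: sum_distrib_left[symmetric] sum_subtractf algebra_simps)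
  also have "\<dots> = mu i * ((\<Sum>j=1..n. t j) - c i)" using slack by simp
  also have "\<dots> \<le> 0" using t mun unfolding strategy_of_def
    by (simp add: mult_nonneg_nonpos)
  finally show ?thesis .
qed

lemma kkt_NE:
  assumes d: "\<forall>j\<in>{1..n}. d j > 0" and r: "rmin < rmax"
    and prof: "profile m n c x"
    and stat: "\<forall>i\<in>{1..m}. \<forall>j\<in>{1..n}. grad m d rmax rmin x i j = mu i"
    and mun: "\<forall>i\<in>{1..m}. mu i \<ge> 0"
    and slack: "\<forall>i\<in>{1..m}. mu i * (c i - (\<Sum>j=1..n. x i j)) = 0"
  shows "pure_NE m n c d rmax rmin x"
proof -
  have d0: "\<forall>j\<in>{1..n}. d j \<noteq> 0" using d by force
  have "utility m n d rmax rmin (x(i := t)) i \<le> utility m n d rmax rmin x i"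
    if i: "i \<in> {1..m}" and t: "strategy_of n c i t" for i t
  proof -
    have A: "(\<Sum>j=1..n. grad m d rmax rmin x i j * (t j - x i j)) \<le> 0"
      by (rule kkt_ineq[where mu=mu and c=c]) (use stat mun slack i t in auto)
    have B: "0 \<le> (rmax - rmin) * (\<Sum>j=1..n. (t j - x i j)^2 / d j)"
      using r d by (intro mult_nonneg_nonneg sum_nonneg) (simp_all add: less_imp_le)
    show ?thesis using util_diff[OF i d0, where s=x and t=t and rmax=rmax and rmin=rmin] A B by linarith
  qed
  then show ?thesis unfolding pure_NE_def using prof by auto
qed

lemma kkt_unique:
  assumes d: "\<forall>j\<in>{1..n}. d j > 0" and r: "rmin < rmax"
    and prof: "profile m n c x"
    and stat: "\<forall>i\<in>{1..m}. \<forall>j\<in>{1..n}. grad m d rmax rmin x i j = mu i"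
    and mun: "\<forall>i\<in>{1..m}. mu i \<ge> 0"
    and slack: "\<forall>i\<in>{1..m}. mu i * (c i - (\<Sum>j=1..n. x i j)) = 0"
    and NE: "pure_NE m n c d rmax rmin s"
  shows "\<forall>i\<in>{1..m}. \<forall>j\<in>{1..n}. s i j = x i j"
proof -
  have d0: "\<forall>j\<in>{1..n}. d j \<noteq> 0" using d by force
  define a where "a = rmax - rmin"
  have a: "a > 0" using r a_def by simp
  define e where "e i j = x i j - s i j" for i j
  define E where "E j = (\<Sum>k=1..m. e k j)" for j
  define F where "F i j = (e i j ^ 2 / 2 + E j * e i j) / d j" for i j
  have profs: "profile m n c s" using NE unfolding pure_NE_def by auto
  have Fi: "(\<Sum>j=1..n. F i j) \<le> 0" if i: "i \<in> {1..m}" for i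
  proof -
    define t where "t j = (s i j + x i j) / 2" for j
    have h1: "strategy_of n c i (x i)" "strategy_of n c i (s i)" using prof profs i unfolding profile_def by auto
    have st: "strategy_of n c i t" using h1 unfolding strategy_of_def t_def
      by (auto simp: sum_divide_distrib[symmetric] sum.distrib)
    have "utility m n d rmax rmin (s(i := t)) i \<le> utility m n d rmax rmin s i"
      using NE i st unfolding pure_NE_def by auto
    with util_diff[OF i d0, where s=s and t=t and rmax=rmax and rmin=rmin]
    have I1: "(\<Sum>j=1..n. grad m d rmax rmin s i j * (t j - s i j)) - a * (\<Sum>j=1..n. (t j - s i j)^2 / d j) \<le> 0"
      unfolding a_def by linarith
    have eq1: "(\<Sum>j=1..n. grad m d rmax rmin s i j * (t j - s i j)) = (\<Sum>j=1..n. grad m d rmax rmin s i j * e i j) / 2"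
      unfolding sum_divide_distrib by (rule sum.cong[OF refl]) (simp add: t_def e_def field_simps)
    have eq2: "(\<Sum>j=1..n. (t j - s i j)^2 / d j) = (\<Sum>j=1..n. e i j ^2 / d j) / 4"
      unfolding sum_divide_distrib by (rule sum.cong[OF refl]) (simp add: t_def e_def field_simps power2_eq_square)
    have I2: "(\<Sum>j=1..n. grad m d rmax rmin x i j * (s i j - x i j)) \<le> 0"
      by (rule kkt_ineq[where mu=mu and c=c]) (use stat mun slack i profs in \<open>auto simp: profile_def\<close>)
    have gd: "grad m d rmax rmin s i j - grad m d rmax rmin x i j = a * (e i j + E j) / d j" if j: "j \<in> {1..n}" for j
    proof -
      have Ej: "E j = (\<Sum>k=1..m. x k j) - (\<Sum>k=1..m. s k j)" unfolding E_def e_def by (simp add: sum_subtractf)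
      have "d j \<noteq> 0" using d0 j by auto
      then show ?thesis unfolding grad_def a_def e_def Ej by (simp add: field_simps)
    qed
    have "(\<Sum>j=1..n. grad m d rmax rmin s i j * e i j) + (\<Sum>j=1..n. grad m d rmax rmin x i j * (s i j - x i j))
        = (\<Sum>j=1..n. (grad m d rmax rmin s i j - grad m d rmax rmin x i j) * e i j)"
      by (simp add: sum.distrib[symmetric] e_def algebra_simps)
    also have "\<dots> = a * (\<Sum>j=1..n. (e i j + E j) * e i j / d j)"
      unfolding sum_distrib_left by (rule sum.cong[OF refl]) (simp add: gd)
    finally have G: "(\<Sum>j=1..n. grad m d rmax rmin s i j * e i j) + (\<Sum>j=1..n. grad m d rmax rmin x i j * (s i j - x i j))
        = a * (\<Sum>j=1..n. (e i j + E j) * e i j / d j)" .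
    have "a * (\<Sum>j=1..n. (e i j + E j) * e i j / d j) \<le> a * ((\<Sum>j=1..n. e i j ^2 / d j) / 2)"
    proof -
      have h: "(\<Sum>j=1..n. grad m d rmax rmin s i j * e i j) / 2 - a * ((\<Sum>j=1..n. e i j ^2 / d j) / 4) \<le> 0"
        using I1 unfolding eq1 eq2 .
      have "a * ((\<Sum>j=1..n. e i j ^2 / d j) / 2) = 2 * (a * ((\<Sum>j=1..n. e i j ^2 / d j) / 4))" by simp
      then show ?thesis using h I2 G by linarith
    qed
    moreover have "(\<Sum>j=1..n. F i j) = (\<Sum>j=1..n. (e i j + E j) * e i j / d j) - (\<Sum>j=1..n. e i j ^2 / d j) / 2"
      unfolding sum_divide_distrib sum_subtractf[symmetric] F_def
    proof (rule sum.cong[OF refl])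
      fix j assume "j \<in> {1..n}"
      then have "d j \<noteq> 0" using d0 by blast
      then show "(e i j ^ 2 / 2 + E j * e i j) / d j = (e i j + E j) * e i j / d j - e i j ^2 / d j / 2"
        by (simp add: field_simps power2_eq_square)
    qed
    ultimately have "a * (\<Sum>j=1..n. F i j) \<le> 0" by (simp add: right_diff_distrib)
    then show ?thesis using a by (simp add: mult_le_0_iff)
  qed
  have "(\<Sum>i=1..m. \<Sum>j=1..n. F i j) \<le> 0" using Fi by (rule sum_nonpos)
  also have "(\<Sum>i=1..m. \<Sum>j=1..n. F i j) = (\<Sum>j=1..n. \<Sum>i=1..m. F i j)" by (rule sum.swap)
  also have "\<dots> = (\<Sum>j=1..n. ((\<Sum>i=1..m. e i j ^ 2) / 2 + E j ^ 2) / d j)"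
  proof (rule sum.cong[OF refl])
    fix j
    have "(\<Sum>i=1..m. F i j) = (\<Sum>i=1..m. e i j ^ 2 / 2 + E j * e i j) / d j"
      unfolding F_def by (simp only: sum_divide_distrib)
    also have "(\<Sum>i=1..m. e i j ^ 2 / 2 + E j * e i j) = (\<Sum>i=1..m. e i j ^ 2) / 2 + E j * E j"
      unfolding E_def by (simp only: sum.distrib sum_divide_distrib[symmetric] sum_distrib_left[symmetric])
    finally show "(\<Sum>i=1..m. F i j) = ((\<Sum>i=1..m. e i j ^ 2) / 2 + E j ^ 2) / d j"
      by (simp add: power2_eq_square)
  qed
  finally have le: "(\<Sum>j=1..n. ((\<Sum>i=1..m. e i j ^ 2) / 2 + E j ^ 2) / d j) \<le> 0" .
  have nn: "\<forall>j\<in>{1..n}. 0 \<le> ((\<Sum>i=1..m. e i j ^ 2) / 2 + E j ^ 2) / d j"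
  proof
    fix j assume "j \<in> {1..n}"
    then have "d j > 0" using d by blast
    moreover have "0 \<le> (\<Sum>i=1..m. e i j ^ 2)" by (rule sum_nonneg) simp
    ultimately show "0 \<le> ((\<Sum>i=1..m. e i j ^ 2) / 2 + E j ^ 2) / d j" by simp
  qed
  have sz: "(\<Sum>j=1..n. ((\<Sum>i=1..m. e i j ^ 2) / 2 + E j ^ 2) / d j) = 0"
  proof -
    have "0 \<le> (\<Sum>j=1..n. ((\<Sum>i=1..m. e i j ^ 2) / 2 + E j ^ 2) / d j)"
      by (rule sum_nonneg) (use nn in blast)
    then show ?thesis using le by linarith
  qed
  have z: "\<forall>j\<in>{1..n}. ((\<Sum>i=1..m. e i j ^ 2) / 2 + E j ^ 2) / d j = 0"
    using sum_nonneg_eq_0_iff[of "{1..n}" "\<lambda>j. ((\<Sum>i=1..m. e i j ^ 2) / 2 + E j ^ 2) / d j"] nn sz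
    by blast
  show ?thesis
  proof (intro ballI)
    fix i j assume i: "i \<in> {1..m}" and j: "j \<in> {1..n}"
    have dj: "d j > 0" using d j by blast
    have "((\<Sum>i=1..m. e i j ^ 2) / 2 + E j ^ 2) / d j = 0" using z j by blast
    then have h: "((\<Sum>i=1..m. e i j ^ 2) / 2 + E j ^ 2) = 0" using dj by simp
    have h2: "0 \<le> (\<Sum>i=1..m. e i j ^ 2)" by (rule sum_nonneg) simp
    have h3: "0 \<le> E j ^ 2" by simp
    from h h2 h3 have h4: "(\<Sum>i=1..m. e i j ^ 2) = 0" by linarith
    have "\<forall>i\<in>{1..m}. e i j ^ 2 = 0"
      using sum_nonneg_eq_0_iff[of "{1..m}" "\<lambda>i. e i j ^ 2"] h4 by simp
    then have "e i j ^ 2 = 0" using i by blast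
    then show "s i j = x i j" unfolding e_def by simp
  qed
qed

theorem theorem3p4:
  fixes m n :: nat and c d :: "nat \<Rightarrow> real" and rmax rmin :: real
    and Dv q :: real and mbar :: nat
    and sstar :: "nat \<Rightarrow> nat \<Rightarrow> real" and mu :: "nat \<Rightarrow> real" and mu2 :: "nat \<Rightarrow> nat \<Rightarrow> real"
  assumes m_pos: "m > 0" and n_pos: "n > 0"
    and c_pos: "\<forall>i\<in>{1..m}. c i > 0"
    and d_pos: "\<forall>j\<in>{1..n}. d j > 0"
    and r_pos: "0 < rmin" and r_lt: "rmin < rmax"
    and c_sorted: "\<forall>i j. 1 \<le> i \<longrightarrow> i \<le> j \<longrightarrow> j \<le> m \<longrightarrow> c i \<le> c j"
  defines "Dv \<equiv> (\<Sum>k=1..n. d k)"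
    and "mbar \<equiv> (LEAST k. k \<le> m \<and>
           (k = m \<or> c (k + 1) > (Dv - (\<Sum>l=1..k. c l)) / real (m - k + 1)))"
    and "q \<equiv> 1 / real (m - mbar + 1) * (1 - (\<Sum>l=1..mbar. c l) / Dv)"
    and "sstar \<equiv> (\<lambda>i j. if i \<le> mbar then c i / Dv * d j else q * d j)"
    and "mu \<equiv> (\<lambda>i. if i \<le> mbar then (rmin - rmax) * (c i / Dv - q) else 0)"
    and "mu2 \<equiv> (\<lambda>i j. 0)"
  shows
    "(\<forall>i\<in>{1..m}. (\<Sum>j=1..n. sstar i j) \<le> c i \<and> (\<forall>j\<in>{1..n}. sstar i j \<ge> 0))
   \<and> (\<forall>i\<in>{1..m}. \<forall>j\<in>{1..n}.
        (rmin - rmax) * (1 / d j * (sstar i j + (\<Sum>k=1..m. sstar k j)) - 1) - mu i + mu2 i j = 0)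
   \<and> (\<forall>i\<in>{1..m}. mu i \<ge> 0 \<and> (\<forall>j\<in>{1..n}. mu2 i j \<ge> 0))
   \<and> (\<forall>i\<in>{1..m}. mu i * (c i - (\<Sum>j=1..n. sstar i j)) = 0 \<and> (\<forall>j\<in>{1..n}. mu2 i j * sstar i j = 0))
   \<and> pure_NE m n c d rmax rmin sstar
   \<and> (\<forall>s. pure_NE m n c d rmax rmin s \<longrightarrow> (\<forall>i\<in>{1..m}. \<forall>j\<in>{1..n}. s i j = sstar i j))"
proof -
  define C where "C k = (\<Sum>l=1..k. c l)" for k
  define P where "P k \<longleftrightarrow> k \<le> m \<and> (k = m \<or> c (k + 1) > (Dv - C k) / real (m - k + 1))" for k
  have mbar_def': "mbar = (LEAST k. P k)" unfolding mbar_def P_def C_def ..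
  have Dpos: "Dv > 0" unfolding Dv_def
    using n_pos d_pos by (intro sum_pos) auto
  have Pm: "P m" unfolding P_def by simp
  have Pmbar: "P mbar" unfolding mbar_def' by (rule LeastI[of P m, OF Pm])
  have M1: "mbar \<le> m" using Pmbar P_def by blast
  have M2: "c (mbar+1) > (Dv - C mbar) / real (m - mbar + 1)" if "mbar < m"
    using Pmbar that P_def by auto
  have M3: "c mbar \<le> (Dv - C (mbar - 1)) / real (m - mbar + 2)" if "mbar > 0"
  proof -
    have "\<not> P (mbar - 1)" unfolding mbar_def' by (rule not_less_Least) (use that mbar_def' in simp)
    moreover have "mbar - 1 \<le> m" "mbar - 1 \<noteq> m" using M1 that by auto
    moreover have "mbar - 1 + 1 = mbar" "m - (mbar - 1) + 1 = m - mbar + 2" using that M1 by auto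
    ultimately show ?thesis unfolding P_def by (simp add: not_less)
  qed
  define Q where "Q = (Dv - C mbar) / real (m - mbar + 1)"
  have kpos: "real (m - mbar + 1) > 0" by simp
  have qQ: "q = Q / Dv" unfolding q_def Q_def C_def using Dpos by (simp add: field_simps)
  have Q1: "c i \<le> Q" if "1 \<le> i" "i \<le> mbar" for i
  proof -
    have mb: "mbar > 0" using that by simp
    have "c i \<le> c mbar" using c_sorted that M1 by auto
    have CC: "C mbar = C (mbar - 1) + c mbar" unfolding C_def using mb
      by (cases mbar) auto
    have r2: "real (m - mbar + 2) = real (m - mbar + 1) + 1" by simp
    have "c mbar * real (m - mbar + 2) \<le> Dv - C (mbar - 1)"
      using M3[OF mb] by (simp add: field_simps)
    then have "c mbar * real (m - mbar + 1) \<le> Dv - C mbar" unfolding CC r2 by (simp add: algebra_simps)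
    then have "c mbar \<le> Q" unfolding Q_def using kpos by (simp add: field_simps)
    with \<open>c i \<le> c mbar\<close> show ?thesis by simp
  qed
  have Q2: "Q < c i" if "mbar < i" "i \<le> m" for i
  proof -
    have "c (mbar + 1) \<le> c i" using c_sorted that by auto
    with M2 that show ?thesis unfolding Q_def by simp
  qed
  have Qpos: "Q > 0"
  proof (cases "mbar = 0")
    case True
    then show ?thesis unfolding Q_def C_def using Dpos by simp
  next
    case False
    then have "c mbar \<le> Q" using Q1[of mbar] by simp
    moreover have "c mbar > 0" using c_pos False M1 by auto
    ultimately show ?thesis by simp
  qed
  have qpos: "q > 0" unfolding qQ using Qpos Dpos by simp
  have rowsum: "(\<Sum>j=1..n. sstar i j) = (if i \<le> mbar then c i else Q)" for i
  proof -
    have "(\<Sum>j=1..n. sstar i j) = (if i \<le> mbar then c i / Dv else q) * Dv"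
      unfolding sstar_def Dv_def by (simp add: sum_distrib_left)
    then show ?thesis using Dpos qQ by simp
  qed
  have colsum: "(\<Sum>k=1..m. sstar k j) = d j * (1 - q)" for j
  proof -
    have "(\<Sum>k=1..m. sstar k j) = (\<Sum>k=1..mbar. sstar k j) + (\<Sum>k=mbar+1..mbar + (m - mbar). sstar k j)"
      using sum.ub_add_nat[of 1 mbar "\<lambda>k. sstar k j" "m - mbar"] M1 by simp
    also have "(\<Sum>k=1..mbar. sstar k j) = (\<Sum>k=1..mbar. c k / Dv * d j)"
      unfolding sstar_def by (rule sum.cong) auto
    also have "\<dots> = C mbar / Dv * d j" unfolding C_def by (simp add: sum_distrib_right sum_divide_distrib)
    also have "(\<Sum>k=mbar+1..mbar + (m - mbar). sstar k j) = (\<Sum>k=mbar+1..mbar + (m - mbar). q * d j)"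
      unfolding sstar_def by (rule sum.cong) auto
    also have "\<dots> = real (m - mbar) * q * d j" by simp
    also have "C mbar / Dv = 1 - real (m - mbar + 1) * q"
      unfolding q_def C_def using kpos by simp
    finally show ?thesis by (simp add: algebra_simps)
  qed
  have stat: "(rmin - rmax) * (1 / d j * (sstar i j + (\<Sum>k=1..m. sstar k j)) - 1) - mu i = 0"
    if j: "j \<in> {1..n}" for i j
  proof -
    have "d j \<noteq> 0" using d_pos j by force
    moreover have "Dv \<noteq> 0" using Dpos by simp
    ultimately show ?thesis unfolding colsum unfolding sstar_def mu_def
      by (simp add: field_simps)
  qed
  have gradeq: "\<forall>i\<in>{1..m}. \<forall>j\<in>{1..n}. grad m d rmax rmin sstar i j = mu i"
  proof (intro ballI)
    fix i j assume "i \<in> {1..m}" "j \<in> {1..n}"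
    have "d j \<noteq> 0" using d_pos \<open>j \<in> {1..n}\<close> by force
    then have "grad m d rmax rmin sstar i j = (rmin - rmax) * (1 / d j * (sstar i j + (\<Sum>k=1..m. sstar k j)) - 1)"
      unfolding grad_def by (simp add: field_simps)
    with stat[OF \<open>j \<in> {1..n}\<close>, of i] show "grad m d rmax rmin sstar i j = mu i" by linarith
  qed
  have feas: "\<forall>i\<in>{1..m}. (\<Sum>j=1..n. sstar i j) \<le> c i \<and> (\<forall>j\<in>{1..n}. sstar i j \<ge> 0)"
  proof (intro ballI conjI)
    fix i assume i: "i \<in> {1..m}"
    show "(\<Sum>j=1..n. sstar i j) \<le> c i" unfolding rowsum using Q2 i by (auto simp: less_imp_le)
    fix j assume j: "j \<in> {1..n}"
    have "c i > 0" "d j > 0" using i j c_pos d_pos by auto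
    then show "sstar i j \<ge> 0" unfolding sstar_def using Dpos qpos by simp
  qed
  have mun: "\<forall>i\<in>{1..m}. mu i \<ge> 0"
  proof
    fix i assume i: "i \<in> {1..m}"
    show "mu i \<ge> 0"
    proof (cases "i \<le> mbar")
      case True
      then have "c i \<le> Q" using Q1 i by auto
      then have "c i / Dv - q \<le> 0" unfolding qQ using Dpos by (simp add: divide_right_mono)
      then show ?thesis unfolding mu_def using True r_lt by (simp add: mult_nonpos_nonpos)
    qed (simp add: mu_def)
  qed
  have slack: "\<forall>i\<in>{1..m}. mu i * (c i - (\<Sum>j=1..n. sstar i j)) = 0"
    unfolding rowsum mu_def by simp
  have prof: "profile m n c sstar" using feas unfolding profile_def strategy_of_def by auto
  have NE: "pure_NE m n c d rmax rmin sstar"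
    by (rule kkt_NE[OF d_pos r_lt prof gradeq mun slack])
  have uniq: "\<forall>s. pure_NE m n c d rmax rmin s \<longrightarrow> (\<forall>i\<in>{1..m}. \<forall>j\<in>{1..n}. s i j = sstar i j)"
    using kkt_unique[OF d_pos r_lt prof gradeq mun slack] by blast
  show ?thesis
  proof (intro conjI)
    show "\<forall>i\<in>{1..m}. \<forall>j\<in>{1..n}.
        (rmin - rmax) * (1 / d j * (sstar i j + (\<Sum>k=1..m. sstar k j)) - 1) - mu i + mu2 i j = 0"
      using stat unfolding mu2_def by simp
    show "\<forall>i\<in>{1..m}. mu i \<ge> 0 \<and> (\<forall>j\<in>{1..n}. mu2 i j \<ge> 0)"
      using mun unfolding mu2_def by simp
    show "\<forall>i\<in>{1..m}. mu i * (c i - (\<Sum>j=1..n. sstar i j)) = 0 \<and> (\<forall>j\<in>{1..n}. mu2 i j * sstar i j = 0)"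
      using slack unfolding mu2_def by simp
  qed (rule feas NE uniq)+
qed

end
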